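(* Let $n\ge1$, $m:\mathbb{Z}^{n+1}\to\mathbb{C}$, $1\le p\le\infty$ and $1/p+1/q=1$. Then $$|\mathcal{Y}_n(m)|_{\mathcal{L}^n\mathcal{F}L^p}\le\sup_{k_0}\Big[\sum_{\substack{k_0+k_1+\cdots+k_n=0\\k_0\text{ fixed}}}|m(k_0,\dots,k_n)|^q\Big]^{1/q},$$ and, for any $p\ge n/(n-1)$ (with $n\ge2$), $$|\mathcal{Y}_n(m)|_{\mathcal{L}^n\mathcal{F}L^p}\le\Big\{\sum_{k_0}\Big[\sum_{\substack{k_0+k_1+\cdots+k_n=0\\k_0\text{ fixed}}}|m|^{\hat q}\Big]^{p/\hat q}\Big\}^{1/p},\qquad \hat q=\frac{p}{p-n/(n-1)}.$$
   Context: $\mathcal{F}L^p$ denotes the space of distributions $\psi$ on $\mathbb{T}$ whose Fourier coefficients $\hat\psi(k)$ ($\psi=\sum_k\hat\psi(k)e^{ik\xi}$) form a sequence in $\ell^p(\mathbb{Z})$, normed by $\|\hat\psi\|_{\ell^p}$. For a multiplier $m$, the $n$-linear operator $\mathcal{Y}_n(m)$ is defined by $\widehat{\mathcal{Y}_n(m)(\psi_1,\dots,\psi_n)}(k_0)=\sum_{k_0+k_1+\cdots+k_n=0}m(k_0,k_1,\dots,k_n)\hat\psi_1(k_1)\cdots\hat\psi_n(k_n)$, and $|\cdot|_{\mathcal{L}^n\mathcal{F}L^p}$ is the $n$-linear operator norm on $\mathcal{F}L^p$. *)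

theory Defs
  imports "HOL-Analysis.Analysis"
begin

(* real power of an extended nonnegative real (used only with positive exponents) *)
definition epowr :: "ennreal \<Rightarrow> real \<Rightarrow> ennreal" where
  "epowr x a = (if x = top then (if a > 0 then top else if a = 0 then 1 else 0)
               else ennreal (enn2real x powr a))"

definition lpn :: "ennreal \<Rightarrow> 'a set \<Rightarrow> ('a \<Rightarrow> ennreal) \<Rightarrow> ennreal" where
  "lpn r A f = (if r = top then (SUP x\<in>A. f x)
               else epowr (\<Sum>\<^sub>\<infinity> x\<in>A. epowr (f x) (enn2real r)) (1 / enn2real r))"

(* indices (k_0,...,k_n) in Z^{n+1} (encoded as nat \<Rightarrow> int, zero beyond n)
   with k_0 fixed and k_0 + k_1 + ... + k_n = 0 *)
definition fiber :: "nat \<Rightarrow> int \<Rightarrow> (nat \<Rightarrow> int) set" where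
  "fiber n k0 = {k. k 0 = k0 \<and> (\<forall>i>n. k i = 0) \<and> (\<Sum>i\<le>n. k i) = 0}"

(* FL^p norm of psi, in terms of its Fourier coefficients psi_hat :: int \<Rightarrow> complex *)
definition FLnorm :: "ennreal \<Rightarrow> (int \<Rightarrow> complex) \<Rightarrow> ennreal" where
  "FLnorm p a = lpn p UNIV (\<lambda>k. ennreal (norm (a k)))"

(* Fourier coefficients of Y_n(m)(psi_1,...,psi_n); psi i are the Fourier coefficients of psi_i *)
definition Yop :: "nat \<Rightarrow> ((nat \<Rightarrow> int) \<Rightarrow> complex) \<Rightarrow> (nat \<Rightarrow> int \<Rightarrow> complex) \<Rightarrow> int \<Rightarrow> complex" where
  "Yop n m psi k0 = (\<Sum>\<^sub>\<infinity> k\<in>fiber n k0. m k * (\<Prod>i\<in>{1..n}. psi i (k i)))"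

definition Y_welldef :: "nat \<Rightarrow> ennreal \<Rightarrow> ((nat \<Rightarrow> int) \<Rightarrow> complex) \<Rightarrow> bool" where
  "Y_welldef n p m = (\<forall>psi. (\<forall>i\<in>{1..n}. FLnorm p (psi i) < top) \<longrightarrow>
      (\<forall>k0. ((\<lambda>k. norm (m k * (\<Prod>i\<in>{1..n}. psi i (k i)))) summable_on (fiber n k0))))"

definition Ynorm :: "nat \<Rightarrow> ennreal \<Rightarrow> ((nat \<Rightarrow> int) \<Rightarrow> complex) \<Rightarrow> ennreal" where
  "Ynorm n p m = (if Y_welldef n p m then
      (SUP psi\<in>{psi. \<forall>i\<in>{1..n}. FLnorm p (psi i) \<le> 1}. FLnorm p (Yop n m psi))
    else top)"

end

theory Submission
  imports Defs
begin

lemma epowr_top[simp]: "a > 0 \<Longrightarrow> epowr top a = top"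
  by (simp add: epowr_def)

lemma epowr_ennreal[simp]: "0 \<le> r \<Longrightarrow> epowr (ennreal r) a = ennreal (r powr a)"
  by (simp add: epowr_def)

lemma epowr_zero[simp]: "a > 0 \<Longrightarrow> epowr 0 a = 0"
  by (simp add: epowr_def)

lemma epowr_nonzero_pos: "a > 0 \<Longrightarrow> x \<noteq> 0 \<Longrightarrow> epowr x a \<noteq> 0"
  by (cases x rule: ennreal_cases) (auto simp: epowr_def)

lemma epowr_one_base[simp]: "epowr 1 a = 1"
  by (simp add: epowr_def)

lemma epowr_1[simp]: "epowr x 1 = x"
  by (cases x rule: ennreal_cases) (auto simp: epowr_def)

lemma epowr_eq_0_iff[simp]: "a > 0 \<Longrightarrow> epowr x a = 0 \<longleftrightarrow> x = 0"
  by (cases x rule: ennreal_cases) (auto simp: epowr_def)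

lemma epowr_eq_top_iff[simp]: "a > 0 \<Longrightarrow> epowr x a = top \<longleftrightarrow> x = top"
  by (cases x rule: ennreal_cases) (auto simp: epowr_def)

lemma epowr_less_top_iff[simp]: "a > 0 \<Longrightarrow> epowr x a < top \<longleftrightarrow> x < top"
  using epowr_eq_top_iff top.not_eq_extremum by blast

lemma epowr_mult_top: assumes "a > 0" shows "epowr (x * top) a = epowr x a * top"
proof (cases "x = 0")
  case True
  then show ?thesis using assms by simp
next
  case False
  then have "epowr x a \<noteq> 0" using assms by simp
  then show ?thesis using False assms by (simp add: ennreal_mult_top)
qed

lemma epowr_mult: assumes "a > 0" shows "epowr (x * y) a = epowr x a * epowr y a"
proof (cases x rule: ennreal_cases)
  case (real r) note r = this
  show ?thesis
  proof (cases y rule: ennreal_cases)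
    case (real s)
    have "epowr (x * y) a = epowr (ennreal (r * s)) a"
      using r real by (simp only: ennreal_mult)
    also have "\<dots> = ennreal ((r * s) powr a)" using r real by (intro epowr_ennreal) simp
    also have "\<dots> = ennreal (r powr a * s powr a)" using r real by (simp only: powr_mult)
    also have "\<dots> = ennreal (r powr a) * ennreal (s powr a)" by (rule ennreal_mult) auto
    also have "\<dots> = epowr x a * epowr y a" using r real by (simp only: epowr_ennreal)
    finally show ?thesis .
  next
    case top
    then show ?thesis using assms epowr_mult_top[of a x] by simp
  qed
next
  case top
  then show ?thesis using assms epowr_mult_top[of a y] by (simp add: mult.commute)
qed

lemma epowr_prod: assumes "a > 0" shows "epowr (\<Prod>i\<in>I. f i) a = (\<Prod>i\<in>I. epowr (f i) a)"
proof (cases "finite I")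
  case True
  then show ?thesis by (induction I rule: finite_induct) (auto simp: epowr_mult assms)
qed simp

lemma epowr_epowr: assumes "a > 0" "b > 0" shows "epowr (epowr x a) b = epowr x (a * b)"
  using assms by (cases x rule: ennreal_cases) (auto simp: powr_powr)

lemma epowr_mono: assumes "a > 0" "x \<le> y" shows "epowr x a \<le> epowr y a"
  using assms
  by (cases x rule: ennreal_cases; cases y rule: ennreal_cases) (auto intro!: ennreal_leI powr_mono2 simp: top_unique)

lemma powr_le1_iff_aux: assumes "a > 0" "(0::real) \<le> r" shows "r powr a \<le> 1 \<longleftrightarrow> r \<le> 1"
proof
  assume h: "r powr a \<le> 1"
  show "r \<le> 1"
  proof (rule ccontr)
    assume "\<not> r \<le> 1"
    then have "1 < r powr a" using gr_one_powr[of r a] assms by simp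
    then show False using h by simp
  qed
qed (use assms in \<open>simp add: powr_le1\<close>)

lemma epowr_le_1_iff: assumes "a > 0" shows "epowr x a \<le> 1 \<longleftrightarrow> x \<le> 1"
  using assms by (cases x rule: ennreal_cases) (auto simp: powr_le1_iff_aux)

lemma powr_pow_aux: assumes "(0::real) \<le> r" "k > 0" shows "(r powr a) ^ k = r powr (a * real k)"
proof (cases "r = 0")
  case False
  then have "(r powr a) ^ k = (r powr a) powr real k" using assms by (simp add: powr_realpow)
  then show ?thesis by (simp add: powr_powr)
qed (use assms in simp)

lemma epowr_pow: assumes "a > 0" "k > 0" shows "epowr x a ^ k = epowr x (a * real k)"
proof (cases "k = 0")
  case False
  then show ?thesis using assms
    by (cases x rule: ennreal_cases) (auto simp: ennreal_power powr_pow_aux power_eq_top_ennreal)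
qed (use assms in simp)

lemma epowr_inv: assumes "a > 0" shows "epowr (epowr x a) (1/a) = x"
  using assms by (simp add: epowr_epowr)

lemma epowr_inv2: assumes "a > 0" shows "epowr (epowr x (1/a)) a = x"
  using assms by (simp add: epowr_epowr)

lemma ennsum_le_infsum: fixes f :: "'a \<Rightarrow> ennreal"
  assumes "finite F" "F \<subseteq> A" shows "sum f F \<le> infsum f A"
  unfolding nonneg_infsum_complete[of A f, simplified]
  using assms by (intro SUP_upper) auto

lemma ennterm_le_infsum: fixes f :: "'a \<Rightarrow> ennreal"
  assumes "x \<in> A" shows "f x \<le> infsum f A"
  using ennsum_le_infsum[of "{x}" A f] assms by simp

lemma infsum_le_ennreal: fixes f :: "'a \<Rightarrow> ennreal"
  assumes "\<And>F. finite F \<Longrightarrow> F \<subseteq> A \<Longrightarrow> sum f F \<le> B" shows "infsum f A \<le> B"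
  unfolding nonneg_infsum_complete[of A f, simplified]
  using assms by (intro SUP_least) auto

lemma infsum_mono_ennreal: fixes f :: "'a \<Rightarrow> ennreal"
  assumes "\<And>x. x \<in> A \<Longrightarrow> f x \<le> g x" shows "infsum f A \<le> infsum g A"
proof (rule infsum_le_ennreal)
  fix F assume F: "finite F" "F \<subseteq> A"
  have "sum f F \<le> sum g F" using F assms by (intro sum_mono) auto
  also have "\<dots> \<le> infsum g A" using F by (rule ennsum_le_infsum)
  finally show "sum f F \<le> infsum g A" .
qed

lemma infsum_subset_ennreal: fixes f :: "'a \<Rightarrow> ennreal"
  assumes "A \<subseteq> B" shows "infsum f A \<le> infsum f B"
  using assms by (intro infsum_le_ennreal ennsum_le_infsum) auto

lemma infsum_cmult_ennreal: fixes f :: "'a \<Rightarrow> ennreal"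
  shows "infsum (\<lambda>x. c * f x) A = c * infsum f A"
  unfolding nonneg_infsum_complete[of A f, simplified] nonneg_infsum_complete[of A "\<lambda>x. c * f x", simplified]
  by (simp add: SUP_mult_left_ennreal sum_distrib_left)

lemma infsum_cmult_ennreal': fixes f :: "'a \<Rightarrow> ennreal"
  shows "infsum (\<lambda>x. f x * c) A = infsum f A * c"
  using infsum_cmult_ennreal[of c f A] by (simp add: mult.commute)

lemma infsum_Sigma_ennreal: fixes f :: "'a \<times> 'b \<Rightarrow> ennreal"
  shows "infsum f (Sigma A B) = infsum (\<lambda>x. infsum (\<lambda>y. f (x, y)) (B x)) A"
proof (rule antisym)
  show "infsum f (Sigma A B) \<le> infsum (\<lambda>x. infsum (\<lambda>y. f (x, y)) (B x)) A"
  proof (rule infsum_le_ennreal)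
    fix F assume F: "finite F" "F \<subseteq> Sigma A B"
    define G where "G = fst ` F"
    define H where "H x = {y. (x, y) \<in> F}" for x
    have fG: "finite G" using F by (simp add: G_def)
    have fH: "finite (H x)" for x
      by (rule finite_subset[of _ "snd ` F"]) (use F in \<open>auto simp: H_def image_iff, metis snd_conv\<close>)
    have FS: "F = Sigma G H" by (auto simp: G_def H_def image_iff, metis fst_conv)
    have "sum f F = (\<Sum>x\<in>G. \<Sum>y\<in>H x. f (x, y))"
      unfolding FS using fG fH by (subst sum.Sigma) auto
    also have "\<dots> \<le> (\<Sum>x\<in>G. infsum (\<lambda>y. f (x, y)) (B x))"
    proof (intro sum_mono ennsum_le_infsum fH)
      fix x assume "x \<in> G" show "H x \<subseteq> B x" using F by (auto simp: H_def)
    qed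
    also have "\<dots> \<le> infsum (\<lambda>x. infsum (\<lambda>y. f (x, y)) (B x)) A"
      using F fG by (intro ennsum_le_infsum) (auto simp: G_def)
    finally show "sum f F \<le> \<dots>" .
  qed
next
  have fin: "(\<Sum>x\<in>G. infsum (\<lambda>y. f (x, y)) (B x)) = infsum f (Sigma G B)" if "finite G" for G
    using that
  proof (induction G rule: finite_induct)
    case empty
    then show ?case by simp
  next
    case (insert x G)
    have eq: "Sigma (insert x G) B = (Pair x ` B x) \<union> Sigma G B" by auto
    have "infsum f (Sigma (insert x G) B) = infsum f (Pair x ` B x) + infsum f (Sigma G B)"
      unfolding eq using insert by (intro infsum_Un_disjoint) (auto intro: nonneg_summable_on_complete)
    also have "infsum f (Pair x ` B x) = infsum (\<lambda>y. f (x, y)) (B x)"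
      by (subst infsum_reindex) (auto simp: inj_on_def o_def)
    finally show ?case using insert by simp
  qed
  show "infsum (\<lambda>x. infsum (\<lambda>y. f (x, y)) (B x)) A \<le> infsum f (Sigma A B)"
  proof (rule infsum_le_ennreal)
    fix G assume G: "finite G" "G \<subseteq> A"
    then show "(\<Sum>x\<in>G. infsum (\<lambda>y. f (x, y)) (B x)) \<le> infsum f (Sigma A B)"
      by (subst fin) (auto intro!: infsum_subset_ennreal)
  qed
qed

lemma infsum_prod_PiE_ennreal:
  fixes f :: "'a \<Rightarrow> 'b \<Rightarrow> ennreal"
  assumes "finite J"
  shows "infsum (\<lambda>g. \<Prod>j\<in>J. f j (g j)) (PiE J (\<lambda>_. UNIV)) = (\<Prod>j\<in>J. infsum (f j) UNIV)"
  using assms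
proof (induction J rule: finite_induct)
  case empty
  then show ?case by simp
next
  case (insert x F)
  have pi: "PiE (insert x F) (\<lambda>_. UNIV) = (\<lambda>(g,y). g(x:=y)) ` (PiE F (\<lambda>_. UNIV) \<times> UNIV)"
    unfolding PiE_insert_eq
    by (subst swap_product [symmetric]) (simp add: image_image case_prod_unfold)
  have inj: "inj_on (\<lambda>(g, y). g(x := y)) (PiE F (\<lambda>_. UNIV) \<times> UNIV)"
    using \<open>x \<notin> F\<close> by (rule inj_combinator')
  have "infsum (\<lambda>g. \<Prod>j\<in>insert x F. f j (g j)) (PiE (insert x F) (\<lambda>_. UNIV))
      = infsum ((\<lambda>g. \<Prod>j\<in>insert x F. f j (g j)) \<circ> (\<lambda>(g,y). g(x:=y))) (PiE F (\<lambda>_. UNIV) \<times> UNIV)"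
    unfolding pi using inj by (rule infsum_reindex)
  also have "\<dots> = infsum (\<lambda>(p, y). f x y * (\<Prod>j\<in>F. f j (p j))) (PiE F (\<lambda>_. UNIV) \<times> UNIV)"
    using insert.hyps by (intro infsum_cong) (auto intro!: arg_cong2[where f="(*)"] prod.cong)
  also have "\<dots> = infsum (\<lambda>p. infsum (\<lambda>y. f x y * (\<Prod>j\<in>F. f j (p j))) UNIV) (PiE F (\<lambda>_. UNIV))"
    by (subst infsum_Sigma_ennreal) simp
  also have "\<dots> = infsum (\<lambda>p. infsum (f x) UNIV * (\<Prod>j\<in>F. f j (p j))) (PiE F (\<lambda>_. UNIV))"
    by (simp add: infsum_cmult_ennreal')
  also have "\<dots> = infsum (f x) UNIV * (\<Prod>j\<in>F. infsum (f j) UNIV)"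
    by (simp add: infsum_cmult_ennreal insert.IH)
  finally show ?case using insert.hyps by simp
qed

lemma wamgm:
  fixes w y :: "'i \<Rightarrow> real"
  assumes I: "finite I" "I \<noteq> {}" and w: "\<And>i. i \<in> I \<Longrightarrow> w i > 0" and ws: "sum w I = 1"
    and y: "\<And>i. i \<in> I \<Longrightarrow> y i \<ge> 0"
  shows "(\<Prod>i\<in>I. y i powr w i) \<le> (\<Sum>i\<in>I. w i * y i)"
proof (cases "\<exists>i\<in>I. y i = 0")
  case True
  then have "(\<Prod>i\<in>I. y i powr w i) = 0" using I by (auto simp: prod_zero_iff)
  then show ?thesis using w y by (simp add: sum_nonneg less_imp_le)
next
  case False
  then have ypos: "\<And>i. i \<in> I \<Longrightarrow> y i > 0" using y by force
  have cv: "convex_on {0<..} (\<lambda>x. - ln x)"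
    using ln_concave by (simp add: concave_on_def)
  have "- ln (\<Sum>i\<in>I. w i *\<^sub>R y i) \<le> (\<Sum>i\<in>I. w i * - ln (y i))"
    using I cv ws w ypos by (intro convex_on_sum[where f = "\<lambda>x. - ln x"]) (auto intro: less_imp_le)
  then have le: "(\<Sum>i\<in>I. w i * ln (y i)) \<le> ln (\<Sum>i\<in>I. w i * y i)"
    by (simp add: sum_negf)
  have pos: "(\<Sum>i\<in>I. w i * y i) > 0"
    using I w ypos by (intro sum_pos) auto
  have "(\<Prod>i\<in>I. y i powr w i) = (\<Prod>i\<in>I. exp (w i * ln (y i)))"
  proof (rule prod.cong)
    fix i assume "i \<in> I"
    then have "y i > 0" by (rule ypos)
    then show "y i powr w i = exp (w i * ln (y i))" by (simp add: powr_def mult.commute)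
  qed simp
  also have "\<dots> = exp (\<Sum>i\<in>I. w i * ln (y i))" using I by (simp add: exp_sum)
  also have "\<dots> \<le> exp (ln (\<Sum>i\<in>I. w i * y i))" using le by simp
  also have "\<dots> = (\<Sum>i\<in>I. w i * y i)" using pos by simp
  finally show ?thesis .
qed

lemma holder_real_finite:
  fixes w :: "'i \<Rightarrow> real" and a :: "'i \<Rightarrow> 'x \<Rightarrow> real"
  assumes I: "finite I" "I \<noteq> {}" and w: "\<And>i. i \<in> I \<Longrightarrow> w i > 0" and ws: "sum w I = 1"
    and a: "\<And>i x. i \<in> I \<Longrightarrow> x \<in> F \<Longrightarrow> a i x \<ge> 0" and F: "finite F"
  shows "(\<Sum>x\<in>F. \<Prod>i\<in>I. a i x) \<le> (\<Prod>i\<in>I. (\<Sum>x\<in>F. a i x powr (1 / w i)) powr w i)"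
proof -
  define T where "T i = (\<Sum>x\<in>F. a i x powr (1 / w i))" for i
  have T0: "T i \<ge> 0" for i by (simp add: T_def sum_nonneg)
  show ?thesis
  proof (cases "\<exists>j\<in>I. T j = 0")
    case True
    then obtain j where j: "j \<in> I" "T j = 0" by blast
    have "a j x = 0" if "x \<in> F" for x
    proof -
      have "a j x powr (1 / w j) = 0"
        using j F that by (subst (asm) T_def, subst (asm) sum_nonneg_eq_0_iff) auto
      then show ?thesis by simp
    qed
    then have "(\<Sum>x\<in>F. \<Prod>i\<in>I. a i x) = 0"
      using j I by (intro sum.neutral ballI) (auto intro!: prod_zero)
    then show ?thesis using T0 by (simp add: prod_nonneg T_def[symmetric])
  next
    case False
    then have Tpos: "\<And>i. i \<in> I \<Longrightarrow> T i > 0" using T0 by (metis less_eq_real_def)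
    define b where "b i x = a i x / T i powr w i" for i x
    have b0: "b i x \<ge> 0" if "i \<in> I" "x \<in> F" for i x using a that by (simp add: b_def)
    have ab: "(\<Prod>i\<in>I. a i x) = (\<Prod>i\<in>I. T i powr w i) * (\<Prod>i\<in>I. b i x)" for x
    proof -
      have "(\<Prod>i\<in>I. T i powr w i) * (\<Prod>i\<in>I. b i x) = (\<Prod>i\<in>I. T i powr w i * b i x)"
        by (simp add: prod.distrib)
      also have "\<dots> = (\<Prod>i\<in>I. a i x)"
      proof (rule prod.cong)
        fix i assume "i \<in> I"
        then have "T i > 0" by (rule Tpos)
        then show "T i powr w i * b i x = a i x" by (simp add: b_def)
      qed simp
      finally show ?thesis by simp
    qed
    have bpow: "b i x powr (1 / w i) = a i x powr (1 / w i) / T i" if "i \<in> I" "x \<in> F" for i x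
      using that a[of i x] Tpos[of i] w[of i]
      by (simp add: b_def powr_divide powr_powr)
    have bb: "(\<Prod>i\<in>I. b i x) \<le> (\<Sum>i\<in>I. w i * (a i x powr (1 / w i) / T i))" if x: "x \<in> F" for x
    proof -
      have "(\<Prod>i\<in>I. b i x) = (\<Prod>i\<in>I. (b i x powr (1 / w i)) powr w i)"
      proof (rule prod.cong)
        fix i assume i: "i \<in> I"
        then have "w i > 0" "b i x \<ge> 0" using w b0 x by auto
        then show "b i x = (b i x powr (1 / w i)) powr w i" by (simp add: powr_powr)
      qed simp
      also have "\<dots> \<le> (\<Sum>i\<in>I. w i * b i x powr (1 / w i))"
        using I w ws by (intro wamgm) auto
      also have "\<dots> = (\<Sum>i\<in>I. w i * (a i x powr (1 / w i) / T i))"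
        using bpow x by (intro sum.cong) auto
      finally show ?thesis .
    qed
    have "(\<Sum>x\<in>F. \<Prod>i\<in>I. b i x) \<le> (\<Sum>x\<in>F. \<Sum>i\<in>I. w i * (a i x powr (1 / w i) / T i))"
      using bb by (intro sum_mono) auto
    also have "\<dots> = (\<Sum>i\<in>I. w i * (T i / T i))"
      by (subst sum.swap) (auto simp: sum_divide_distrib[symmetric] sum_distrib_left[symmetric] T_def intro!: sum.cong)
    also have "\<dots> = sum w I"
    proof (rule sum.cong)
      fix i assume "i \<in> I"
      then have "T i \<noteq> 0" using Tpos by (metis less_irrefl)
      then show "w i * (T i / T i) = w i" by simp
    qed simp
    also have "\<dots> = 1" by (rule ws)
    finally have sb: "(\<Sum>x\<in>F. \<Prod>i\<in>I. b i x) \<le> 1" .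
    have "(\<Sum>x\<in>F. \<Prod>i\<in>I. a i x) = (\<Prod>i\<in>I. T i powr w i) * (\<Sum>x\<in>F. \<Prod>i\<in>I. b i x)"
      by (simp add: ab sum_distrib_left)
    also have "\<dots> \<le> (\<Prod>i\<in>I. T i powr w i) * 1"
      using sb by (intro mult_left_mono) (auto intro: prod_nonneg)
    finally show ?thesis by (simp add: T_def)
  qed
qed

lemma prod_mono_ennreal: fixes f g :: "'a \<Rightarrow> ennreal"
  assumes "\<And>i. i \<in> A \<Longrightarrow> f i \<le> g i" shows "prod f A \<le> prod g A"
proof (cases "finite A")
  case True
  then show ?thesis using assms
    by (induction A rule: finite_induct) (auto intro!: mult_mono)
qed simp

lemma holder_ennreal_finite:
  fixes w :: "'i \<Rightarrow> real" and g :: "'i \<Rightarrow> 'x \<Rightarrow> ennreal"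
  assumes I: "finite I" "I \<noteq> {}" and w: "\<And>i. i \<in> I \<Longrightarrow> w i > 0" and ws: "sum w I = 1"
    and F: "finite F"
  shows "(\<Sum>x\<in>F. \<Prod>i\<in>I. g i x) \<le> (\<Prod>i\<in>I. epowr (\<Sum>x\<in>F. epowr (g i x) (1 / w i)) (w i))"
proof (cases "\<exists>i\<in>I. \<exists>x\<in>F. g i x = top")
  case True
  then obtain j y where jy: "j \<in> I" "y \<in> F" "g j y = top" by blast
  show ?thesis
  proof (cases "\<exists>i\<in>I. \<forall>x\<in>F. g i x = 0")
    case True
    then obtain i where i: "i \<in> I" "\<forall>x\<in>F. g i x = 0" by blast
    have "(\<Sum>x\<in>F. \<Prod>i\<in>I. g i x) = 0"
      using i I by (intro sum.neutral ballI) (auto intro!: prod_zero)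
    then show ?thesis by simp
  next
    case False
    have nz: "epowr (\<Sum>x\<in>F. epowr (g i x) (1 / w i)) (w i) \<noteq> 0" if i: "i \<in> I" for i
    proof -
      obtain x where x: "x \<in> F" "g i x \<noteq> 0" using False i by blast
      have "epowr (g i x) (1 / w i) \<noteq> 0" using x w[OF i] by simp
      then have "(\<Sum>x\<in>F. epowr (g i x) (1 / w i)) \<noteq> 0" using x F by (auto simp: sum_eq_0_iff)
      then show ?thesis using w[OF i] by simp
    qed
    have tp: "epowr (\<Sum>x\<in>F. epowr (g j x) (1 / w j)) (w j) = top"
    proof -
      have "epowr (g j y) (1 / w j) = top" using jy w[OF jy(1)] by simp
      then have "(\<Sum>x\<in>F. epowr (g j x) (1 / w j)) = top" using jy F
        by (subst ennreal_sum_eq_top) (auto intro!: bexI[of _ y])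
      then show ?thesis using w[OF jy(1)] by simp
    qed
    have "(\<Prod>i\<in>I. epowr (\<Sum>x\<in>F. epowr (g i x) (1 / w i)) (w i)) = top"
      using I nz tp jy by (subst ennreal_prod_eq_top) blast
    then show ?thesis by simp
  qed
next
  case False
  define a where "a i x = enn2real (g i x)" for i x
  have ga: "g i x = ennreal (a i x)" if "i \<in> I" "x \<in> F" for i x
    using False that by (auto simp: a_def ennreal_enn2real_if)
  have a0: "a i x \<ge> 0" for i x by (simp add: a_def)
  have "(\<Sum>x\<in>F. \<Prod>i\<in>I. g i x) = (\<Sum>x\<in>F. ennreal (\<Prod>i\<in>I. a i x))"
    using ga a0 by (auto intro!: sum.cong simp: prod_ennreal[symmetric] cong: prod.cong)
  also have "\<dots> = ennreal (\<Sum>x\<in>F. \<Prod>i\<in>I. a i x)"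
    using a0 by (simp add: sum_ennreal prod_nonneg)
  also have "\<dots> \<le> ennreal (\<Prod>i\<in>I. (\<Sum>x\<in>F. a i x powr (1 / w i)) powr w i)"
    using holder_real_finite[OF I w ws _ F, of a] a0 by (intro ennreal_leI) auto
  also have "\<dots> = (\<Prod>i\<in>I. epowr (\<Sum>x\<in>F. epowr (g i x) (1 / w i)) (w i))"
  proof -
    have "(\<Prod>i\<in>I. epowr (\<Sum>x\<in>F. epowr (g i x) (1 / w i)) (w i))
        = (\<Prod>i\<in>I. ennreal ((\<Sum>x\<in>F. a i x powr (1 / w i)) powr w i))"
    proof (rule prod.cong)
      fix i assume i: "i \<in> I"
      have "(\<Sum>x\<in>F. epowr (g i x) (1 / w i)) = (\<Sum>x\<in>F. ennreal (a i x powr (1 / w i)))"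
        using ga i a0 by (intro sum.cong) auto
      also have "\<dots> = ennreal (\<Sum>x\<in>F. a i x powr (1 / w i))" by (simp add: sum_ennreal)
      finally show "epowr (\<Sum>x\<in>F. epowr (g i x) (1 / w i)) (w i) = ennreal ((\<Sum>x\<in>F. a i x powr (1 / w i)) powr w i)"
        by (simp add: sum_nonneg)
    qed simp
    also have "\<dots> = ennreal (\<Prod>i\<in>I. (\<Sum>x\<in>F. a i x powr (1 / w i)) powr w i)"
      by (simp add: prod_ennreal)
    finally show ?thesis by simp
  qed
  finally show ?thesis .
qed

lemma holder_ennreal:
  fixes w :: "'i \<Rightarrow> real" and g :: "'i \<Rightarrow> 'x \<Rightarrow> ennreal"
  assumes I: "finite I" "I \<noteq> {}" and w: "\<And>i. i \<in> I \<Longrightarrow> w i > 0" and ws: "sum w I = 1"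
  shows "infsum (\<lambda>x. \<Prod>i\<in>I. g i x) A \<le> (\<Prod>i\<in>I. epowr (infsum (\<lambda>x. epowr (g i x) (1 / w i)) A) (w i))"
proof (rule infsum_le_ennreal)
  fix F assume F: "finite F" "F \<subseteq> A"
  have "(\<Sum>x\<in>F. \<Prod>i\<in>I. g i x) \<le> (\<Prod>i\<in>I. epowr (\<Sum>x\<in>F. epowr (g i x) (1 / w i)) (w i))"
    by (rule holder_ennreal_finite[OF I w ws F(1)])
  also have "\<dots> \<le> (\<Prod>i\<in>I. epowr (infsum (\<lambda>x. epowr (g i x) (1 / w i)) A) (w i))"
    using F w by (intro prod_mono_ennreal epowr_mono ennsum_le_infsum) auto
  finally show "(\<Sum>x\<in>F. \<Prod>i\<in>I. g i x) \<le> \<dots>" .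
qed

lemma sum_atMost_split0: "(\<Sum>i\<le>(n::nat). k i) = k 0 + (\<Sum>i\<in>{1..n}. (k i :: int))"
proof -
  have "{..n} = insert 0 {1..n}" by auto
  then show ?thesis by simp
qed

lemma KL1:
  fixes f :: "nat \<Rightarrow> int \<Rightarrow> ennreal"
  shows "infsum (\<lambda>k0. infsum (\<lambda>k. \<Prod>i\<in>{1..n}. f i (k i)) (fiber n k0)) UNIV
       = (\<Prod>i\<in>{1..n}. infsum (f i) UNIV)"
proof -
  define ext where "ext g = (\<lambda>t. if t = 0 then - (\<Sum>i\<in>{1..n}. g i) else if t \<le> n then g t else 0)"
    for g :: "nat \<Rightarrow> int"
  have "infsum (\<lambda>k0. infsum (\<lambda>k. \<Prod>i\<in>{1..n}. f i (k i)) (fiber n k0)) UNIV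
      = infsum (\<lambda>(k0, k). \<Prod>i\<in>{1..n}. f i (k i)) (Sigma UNIV (fiber n))"
    by (subst infsum_Sigma_ennreal) simp
  also have "\<dots> = infsum (\<lambda>g. \<Prod>i\<in>{1..n}. f i (g i)) (PiE {1..n} (\<lambda>_. UNIV))"
  proof (rule infsum_reindex_bij_witness[where j = "\<lambda>(k0, k). restrict k {1..n}"
        and i = "\<lambda>g. (- (\<Sum>i\<in>{1..n}. g i), ext g)"])
    fix a assume a: "a \<in> Sigma UNIV (fiber n)"
    obtain k0 k where ak: "a = (k0, k)" by fastforce
    have k: "k 0 = k0" "\<And>i. i > n \<Longrightarrow> k i = 0" "k 0 + (\<Sum>i\<in>{1..n}. k i) = 0"
      using a by (auto simp: ak fiber_def sum_atMost_split0)
    have s: "(\<Sum>i\<in>{1..n}. restrict k {1..n} i) = (\<Sum>i\<in>{1..n}. k i)" by simp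
    have "ext (restrict k {1..n}) = k"
    proof
      fix t show "ext (restrict k {1..n}) t = k t"
        using k by (cases "t = 0"; cases "t \<le> n") (auto simp: ext_def)
    qed
    then show "(\<lambda>g. (- (\<Sum>i\<in>{1..n}. g i), ext g)) ((\<lambda>(k0, k). restrict k {1..n}) a) = a"
      using k by (auto simp: ak)
    show "(\<lambda>(k0, k). restrict k {1..n}) a \<in> PiE {1..n} (\<lambda>_. UNIV)" by (auto simp: ak)
    show "(\<lambda>g. \<Prod>i\<in>{1..n}. f i (g i)) ((\<lambda>(k0, k). restrict k {1..n}) a) = (\<lambda>(k0, k). \<Prod>i\<in>{1..n}. f i (k i)) a"
      by (auto simp: ak)
  next
    fix b assume b: "b \<in> PiE {1..n} (\<lambda>_. UNIV :: int set)"
    show "(\<lambda>(k0, k). restrict k {1..n}) ((\<lambda>g. (- (\<Sum>i\<in>{1..n}. g i), ext g)) b) = b"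
      using b by (auto simp: ext_def restrict_def PiE_def extensional_def fun_eq_iff)
    have "(\<Sum>i\<in>{1..n}. ext b i) = (\<Sum>i\<in>{1..n}. b i)"
      by (intro sum.cong) (auto simp: ext_def)
    then show "(\<lambda>g. (- (\<Sum>i\<in>{1..n}. g i), ext g)) b \<in> Sigma UNIV (fiber n)"
      by (auto simp: fiber_def sum_atMost_split0 ext_def)
  qed
  also have "\<dots> = (\<Prod>i\<in>{1..n}. infsum (f i) UNIV)"
    by (rule infsum_prod_PiE_ennreal) simp
  finally show ?thesis .
qed

lemma KL2:
  fixes h :: "nat \<Rightarrow> int \<Rightarrow> ennreal"
  assumes i0: "i0 \<in> {1..n}"
  shows "infsum (\<lambda>k. \<Prod>j\<in>{1..n} - {i0}. h j (k j)) (fiber n k0)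
       = (\<Prod>j\<in>{1..n} - {i0}. infsum (h j) UNIV)"
proof -
  define J where "J = {1..n} - {i0}"
  have sJ: "(\<Sum>i\<in>{1..n}. g i) = g i0 + (\<Sum>i\<in>J. g i)" for g :: "nat \<Rightarrow> int"
    using i0 by (simp add: J_def sum.remove)
  define ext where "ext g = (\<lambda>t. if t = 0 then k0 else if t = i0 then - k0 - (\<Sum>j\<in>J. g j)
                                  else if t \<in> J then g t else 0)" for g :: "nat \<Rightarrow> int"
  have "infsum (\<lambda>k. \<Prod>j\<in>J. h j (k j)) (fiber n k0)
      = infsum (\<lambda>g. \<Prod>j\<in>J. h j (g j)) (PiE J (\<lambda>_. UNIV))"
  proof (rule infsum_reindex_bij_witness[where j = "\<lambda>k. restrict k J" and i = ext])
    fix k assume a: "k \<in> fiber n k0"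
    have k12: "k 0 = k0" "\<And>i. i > n \<Longrightarrow> k i = 0" "k 0 + (\<Sum>i\<in>{1..n}. k i) = 0"
      using a by (auto simp: fiber_def sum_atMost_split0)
    have k: "k 0 = k0" "\<And>i. i > n \<Longrightarrow> k i = 0" "k 0 + k i0 + (\<Sum>i\<in>J. k i) = 0"
      using k12 sJ[of k] by auto
    show "ext (restrict k J) = k"
    proof
      fix t show "ext (restrict k J) t = k t"
        using k i0 by (cases "t = 0"; cases "t = i0"; cases "t \<in> J") (auto simp: ext_def J_def)
    qed
    show "restrict k J \<in> PiE J (\<lambda>_. UNIV)" by auto
    show "(\<Prod>j\<in>J. h j (restrict k J j)) = (\<Prod>j\<in>J. h j (k j))" by simp
  next
    fix b assume b: "b \<in> PiE J (\<lambda>_. UNIV :: int set)"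
    have i0J: "i0 \<notin> J" "0 \<notin> J" using i0 by (auto simp: J_def)
    show "restrict (ext b) J = b"
      using b i0J by (auto simp: ext_def restrict_def PiE_def extensional_def fun_eq_iff)
    have "(\<Sum>i\<in>J. ext b i) = (\<Sum>i\<in>J. b i)"
      using i0J by (intro sum.cong) (auto simp: ext_def)
    moreover have "ext b i0 = - k0 - (\<Sum>j\<in>J. b j)" "ext b 0 = k0" using i0 by (auto simp: ext_def)
    moreover have "\<forall>i>n. ext b i = 0" using i0 by (auto simp: ext_def J_def)
    ultimately have "ext b 0 + (\<Sum>i\<in>{1..n}. ext b i) = 0" "ext b 0 = k0" "\<forall>i>n. ext b i = 0"
      using sJ[of "ext b"] by auto
    then show "ext b \<in> fiber n k0"
      by (simp add: fiber_def sum_atMost_split0)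
  qed
  also have "\<dots> = (\<Prod>j\<in>J. infsum (h j) UNIV)"
    by (rule infsum_prod_PiE_ennreal) (simp add: J_def)
  finally show ?thesis by (simp add: J_def)
qed

declare epowr_ennreal[simp del]

lemma ennreal_infsum_real:
  fixes f :: "'a \<Rightarrow> real"
  assumes f0: "\<And>x. x \<in> A \<Longrightarrow> f x \<ge> 0" and fin: "infsum (\<lambda>x. ennreal (f x)) A < top"
  shows "f summable_on A" "ennreal (infsum f A) = infsum (\<lambda>x. ennreal (f x)) A"
proof -
  have sE: "sum f F \<le> enn2real (infsum (\<lambda>x. ennreal (f x)) A)" if F: "finite F" "F \<subseteq> A" for F
  proof -
    have "ennreal (sum f F) = (\<Sum>x\<in>F. ennreal (f x))"
      using F f0 by (intro sum_ennreal[symmetric]) auto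
    also have "\<dots> \<le> infsum (\<lambda>x. ennreal (f x)) A" using F by (rule ennsum_le_infsum)
    finally have "ennreal (sum f F) \<le> infsum (\<lambda>x. ennreal (f x)) A" .
    then have "enn2real (ennreal (sum f F)) \<le> enn2real (infsum (\<lambda>x. ennreal (f x)) A)"
      using fin by (intro enn2real_mono) auto
    moreover have "sum f F \<ge> 0" using F f0 by (intro sum_nonneg) auto
    ultimately show ?thesis by simp
  qed
  show sm: "f summable_on A"
    by (rule nonneg_bdd_above_summable_on) (use f0 sE in \<open>auto intro!: bdd_aboveI\<close>)
  have "ennreal (infsum f A) = (SUP F\<in>{F. finite F \<and> F \<subseteq> A}. ennreal (sum f F))"
    using sm f0 by (rule infsum_nonneg_is_SUPREMUM_ennreal)
  also have "\<dots> = (SUP F\<in>{F. finite F \<and> F \<subseteq> A}. (\<Sum>x\<in>F. ennreal (f x)))"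
    using f0 by (intro SUP_cong refl sum_ennreal[symmetric]) auto
  also have "\<dots> = infsum (\<lambda>x. ennreal (f x)) A"
    by (subst nonneg_infsum_complete) auto
  finally show "ennreal (infsum f A) = infsum (\<lambda>x. ennreal (f x)) A" .
qed

lemma ennreal_norm_term:
  "ennreal (norm (m k * (\<Prod>i\<in>I. psi i (k i) :: complex)))
   = ennreal (norm (m k)) * (\<Prod>i\<in>I. ennreal (norm (psi i (k i))))"
  by (simp add: norm_mult prod_norm ennreal_mult prod_ennreal)

definition EE :: "nat \<Rightarrow> ((nat \<Rightarrow> int) \<Rightarrow> complex) \<Rightarrow> (nat \<Rightarrow> int \<Rightarrow> complex) \<Rightarrow> int \<Rightarrow> ennreal" where
  "EE n m psi k0 = infsum (\<lambda>k. ennreal (norm (m k)) * (\<Prod>i\<in>{1..n}. ennreal (norm (psi i (k i))))) (fiber n k0)"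

lemma Y_le_E: "ennreal (norm (Yop n m psi k0)) \<le> EE n m psi k0"
proof (cases "EE n m psi k0 = top")
  case False
  define f where "f k = m k * (\<Prod>i\<in>{1..n}. psi i (k i))" for k
  have eq: "EE n m psi k0 = infsum (\<lambda>k. ennreal (norm (f k))) (fiber n k0)"
    by (simp add: EE_def f_def ennreal_norm_term)
  have fin: "infsum (\<lambda>k. ennreal (norm (f k))) (fiber n k0) < top"
    using False eq by (simp add: top.not_eq_extremum)
  note r = ennreal_infsum_real[of "fiber n k0" "\<lambda>k. norm (f k)", OF _ fin]
  have "norm (Yop n m psi k0) \<le> infsum (\<lambda>k. norm (f k)) (fiber n k0)"
    unfolding Yop_def f_def[symmetric] using r(1) by (intro norm_infsum_bound) simp
  then have "ennreal (norm (Yop n m psi k0)) \<le> ennreal (infsum (\<lambda>k. norm (f k)) (fiber n k0))"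
    by (rule ennreal_leI)
  also have "\<dots> = EE n m psi k0" using r(2) eq by simp
  finally show ?thesis .
qed simp

lemma Ynorm_leI:
  assumes wd: "B < top \<Longrightarrow> Y_welldef n p m"
    and bd: "\<And>psi. B < top \<Longrightarrow> (\<forall>i\<in>{1..n}. FLnorm p (psi i) \<le> 1) \<Longrightarrow> FLnorm p (Yop n m psi) \<le> B"
  shows "Ynorm n p m \<le> B"
proof (cases "B = top")
  case False
  then have B: "B < top" by (simp add: top.not_eq_extremum)
  show ?thesis unfolding Ynorm_def using wd[OF B] bd[OF B] by (auto intro!: SUP_least)
qed simp

lemma welldef_I:
  assumes "\<And>psi k0. \<forall>i\<in>{1..n}. FLnorm p (psi i) < top \<Longrightarrow> EE n m psi k0 < top"
  shows "Y_welldef n p m"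
  unfolding Y_welldef_def
proof (intro allI impI)
  fix psi k0 assume "\<forall>i\<in>{1..n}. FLnorm p (psi i) < top"
  then have "EE n m psi k0 < top" by (rule assms)
  then have "infsum (\<lambda>k. ennreal (norm (m k * (\<Prod>i\<in>{1..n}. psi i (k i))))) (fiber n k0) < top"
    by (simp add: EE_def ennreal_norm_term)
  then show "(\<lambda>k. norm (m k * (\<Prod>i\<in>{1..n}. psi i (k i)))) summable_on fiber n k0"
    by (intro ennreal_infsum_real(1)) auto
qed

lemma FLnorm_top: "FLnorm top a = (SUP k. ennreal (norm (a k)))"
  by (simp add: FLnorm_def lpn_def)

lemma FLnorm_fin: "pr > 0 \<Longrightarrow> FLnorm (ennreal pr) a
   = epowr (infsum (\<lambda>k. epowr (ennreal (norm (a k))) pr) UNIV) (1 / pr)"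
  by (simp add: FLnorm_def lpn_def)

lemma lpn_fin: "r > 0 \<Longrightarrow> lpn (ennreal r) A f = epowr (infsum (\<lambda>x. epowr (f x) r) A) (1 / r)"
  by (simp add: lpn_def)

lemma lpn_top: "lpn top A f = (SUP x\<in>A. f x)"
  by (simp add: lpn_def)

lemma holder2:
  fixes f g :: "'x \<Rightarrow> ennreal"
  assumes a: "a > 0" and b: "b > 0" and ab: "1 / a + 1 / b = 1"
  shows "infsum (\<lambda>x. f x * g x) A \<le> epowr (infsum (\<lambda>x. epowr (f x) a) A) (1 / a)
                                      * epowr (infsum (\<lambda>x. epowr (g x) b) A) (1 / b)"
  using holder_ennreal[where I="{0::nat, 1}" and w="\<lambda>i. if i = 0 then 1 / a else 1 / b" and A=A
      and g="\<lambda>i. if i = 0 then f else g"] a b ab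
  by simp

lemma prod_less_top_ennreal: fixes f :: "'a \<Rightarrow> ennreal"
  assumes "\<And>i. i \<in> I \<Longrightarrow> f i < top" shows "prod f I < top"
  using assms by (metis ennreal_prod_eq_top top.not_eq_extremum less_irrefl)

lemma prod_le_1_ennreal: fixes f :: "'a \<Rightarrow> ennreal"
  assumes "\<And>i. i \<in> I \<Longrightarrow> f i \<le> 1" shows "prod f I \<le> 1"
  using prod_mono_ennreal[of I f "\<lambda>_. 1"] assms by simp

lemma EE_le_top_case:
  "EE n m psi k0 \<le> infsum (\<lambda>k. ennreal (norm (m k))) (fiber n k0) * (\<Prod>i\<in>{1..n}. FLnorm top (psi i))"
proof -
  have "EE n m psi k0 \<le> infsum (\<lambda>k. ennreal (norm (m k)) * (\<Prod>i\<in>{1..n}. FLnorm top (psi i))) (fiber n k0)"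
    unfolding EE_def
  proof (intro infsum_mono_ennreal mult_left_mono prod_mono_ennreal)
    fix k i show "ennreal (norm (psi i (k i))) \<le> FLnorm top (psi i)"
      unfolding FLnorm_top by (rule SUP_upper) simp
  qed simp
  also have "\<dots> = infsum (\<lambda>k. ennreal (norm (m k))) (fiber n k0) * (\<Prod>i\<in>{1..n}. FLnorm top (psi i))"
    by (rule infsum_cmult_ennreal')
  finally show ?thesis .
qed

lemma L_top: "Ynorm n top m \<le> (SUP k0. infsum (\<lambda>k. ennreal (norm (m k))) (fiber n k0))"
  (is "_ \<le> ?B")
proof (rule Ynorm_leI)
  assume B: "?B < top"
  show "Y_welldef n top m"
  proof (rule welldef_I)
    fix psi k0 assume fin: "\<forall>i\<in>{1..n}. FLnorm top (psi i) < top"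
    have "infsum (\<lambda>k. ennreal (norm (m k))) (fiber n k0) \<le> ?B" by (rule SUP_upper) simp
    then have "infsum (\<lambda>k. ennreal (norm (m k))) (fiber n k0) < top" using B by simp
    moreover have "(\<Prod>i\<in>{1..n}. FLnorm top (psi i)) < top" using fin by (intro prod_less_top_ennreal) auto
    ultimately have "infsum (\<lambda>k. ennreal (norm (m k))) (fiber n k0) * (\<Prod>i\<in>{1..n}. FLnorm top (psi i)) < top"
      by (simp add: ennreal_mult_less_top)
    then show "EE n m psi k0 < top" using EE_le_top_case[of n m psi k0] by simp
  qed
next
  fix psi assume ball: "\<forall>i\<in>{1..n}. FLnorm top (psi i) \<le> 1"
  show "FLnorm top (Yop n m psi) \<le> ?B"
    unfolding FLnorm_top
  proof (rule SUP_least)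
    fix k0
    have "ennreal (norm (Yop n m psi k0)) \<le> EE n m psi k0" by (rule Y_le_E)
    also have "\<dots> \<le> infsum (\<lambda>k. ennreal (norm (m k))) (fiber n k0) * (\<Prod>i\<in>{1..n}. FLnorm top (psi i))"
      by (rule EE_le_top_case)
    also have "\<dots> \<le> infsum (\<lambda>k. ennreal (norm (m k))) (fiber n k0) * 1"
      using ball by (intro mult_left_mono prod_le_1_ennreal) auto
    also have "\<dots> \<le> ?B"
      using SUP_upper[of k0 UNIV "\<lambda>k0. infsum (\<lambda>k. ennreal (norm (m k))) (fiber n k0)"] by simp
    finally show "ennreal (norm (Yop n m psi k0)) \<le> ?B" .
  qed
qed

lemma L_one: "Ynorm n 1 m \<le> (SUP k0. SUP k\<in>fiber n k0. ennreal (norm (m k)))"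
  (is "_ \<le> ?B")
proof -
  have FL1: "FLnorm 1 a = infsum (\<lambda>k. ennreal (norm (a k))) UNIV" for a
    using FLnorm_fin[of 1 a] by simp
  have Mle: "ennreal (norm (m k)) \<le> ?B" if "k \<in> fiber n k0" for k k0
    using that by (meson SUP_upper2 UNIV_I order_refl)
  have EEle: "EE n m psi k0 \<le> ?B * infsum (\<lambda>k. \<Prod>i\<in>{1..n}. ennreal (norm (psi i (k i)))) (fiber n k0)" for psi k0
  proof -
    have "EE n m psi k0 \<le> infsum (\<lambda>k. ?B * (\<Prod>i\<in>{1..n}. ennreal (norm (psi i (k i))))) (fiber n k0)"
      unfolding EE_def using Mle by (intro infsum_mono_ennreal mult_right_mono) auto
    then show ?thesis by (simp add: infsum_cmult_ennreal)
  qed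
  have KL: "infsum (\<lambda>k0. infsum (\<lambda>k. \<Prod>i\<in>{1..n}. ennreal (norm (psi i (k i)))) (fiber n k0)) UNIV
      = (\<Prod>i\<in>{1..n}. FLnorm 1 (psi i))" for psi
    unfolding FL1 by (rule KL1)
  show ?thesis
  proof (rule Ynorm_leI)
    assume B: "?B < top"
    show "Y_welldef n 1 m"
    proof (rule welldef_I)
      fix psi k0 assume fin: "\<forall>i\<in>{1..n}. FLnorm 1 (psi i) < top"
      have "infsum (\<lambda>k. \<Prod>i\<in>{1..n}. ennreal (norm (psi i (k i)))) (fiber n k0)
          \<le> (\<Prod>i\<in>{1..n}. FLnorm 1 (psi i))"
        unfolding KL[symmetric] by (rule ennterm_le_infsum) simp
      also have "\<dots> < top" using fin by (intro prod_less_top_ennreal) auto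
      finally have "?B * infsum (\<lambda>k. \<Prod>i\<in>{1..n}. ennreal (norm (psi i (k i)))) (fiber n k0) < top"
        using B by (simp add: ennreal_mult_less_top)
      then show "EE n m psi k0 < top" using EEle[of psi k0] by simp
    qed
  next
    fix psi assume ball: "\<forall>i\<in>{1..n}. FLnorm 1 (psi i) \<le> 1"
    have "FLnorm 1 (Yop n m psi) = infsum (\<lambda>k0. ennreal (norm (Yop n m psi k0))) UNIV" by (rule FL1)
    also have "\<dots> \<le> infsum (\<lambda>k0. ?B * infsum (\<lambda>k. \<Prod>i\<in>{1..n}. ennreal (norm (psi i (k i)))) (fiber n k0)) UNIV"
      by (intro infsum_mono_ennreal order_trans[OF Y_le_E EEle])
    also have "\<dots> = ?B * infsum (\<lambda>k0. infsum (\<lambda>k. \<Prod>i\<in>{1..n}. ennreal (norm (psi i (k i)))) (fiber n k0)) UNIV"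
      by (rule infsum_cmult_ennreal)
    also have "\<dots> = ?B * (\<Prod>i\<in>{1..n}. FLnorm 1 (psi i))"
      by (simp only: KL)
    also have "\<dots> \<le> ?B * 1"
      using ball by (intro mult_left_mono prod_le_1_ennreal) auto
    finally show "FLnorm 1 (Yop n m psi) \<le> ?B" by simp
  qed
qed

lemma L_mid:
  assumes pr: "pr > 0" and qr: "qr > 0" and pq: "1 / pr + 1 / qr = 1"
  shows "Ynorm n (ennreal pr) m \<le> (SUP k0. epowr (infsum (\<lambda>k. epowr (ennreal (norm (m k))) qr) (fiber n k0)) (1 / qr))"
    (is "_ \<le> ?B")
proof -
  define C where "C k0 = epowr (infsum (\<lambda>k. epowr (ennreal (norm (m k))) qr) (fiber n k0)) (1 / qr)" for k0
  define P where "P psi k = (\<Prod>i\<in>{1..n}. ennreal (norm (psi i (k i))))" for psi :: "nat \<Rightarrow> int \<Rightarrow> complex" and k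
  define S where "S psi i = infsum (\<lambda>k. epowr (ennreal (norm (psi i k))) pr) UNIV" for psi :: "nat \<Rightarrow> int \<Rightarrow> complex" and i
  define D where "D psi k0 = epowr (infsum (\<lambda>k. epowr (P psi k) pr) (fiber n k0)) (1 / pr)" for psi k0
  have CB: "C k0 \<le> ?B" for k0 unfolding C_def by (rule SUP_upper) simp
  have pr': "1 / pr > 0" using pr by simp
  have FLS: "FLnorm (ennreal pr) (psi i) = epowr (S psi i) (1 / pr)" for psi i
    by (simp add: FLnorm_fin pr S_def)
  have EEle: "EE n m psi k0 \<le> C k0 * D psi k0" for psi k0
  proof -
    have "EE n m psi k0 = infsum (\<lambda>k. ennreal (norm (m k)) * P psi k) (fiber n k0)"
      by (simp add: EE_def P_def)
    also have "\<dots> \<le> C k0 * D psi k0"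
      unfolding C_def D_def by (rule holder2[OF qr pr]) (use pq in simp)
    finally show ?thesis .
  qed
  have KL: "infsum (\<lambda>k0. infsum (\<lambda>k. epowr (P psi k) pr) (fiber n k0)) UNIV = (\<Prod>i\<in>{1..n}. S psi i)" for psi
  proof -
    have "infsum (\<lambda>k0. infsum (\<lambda>k. epowr (P psi k) pr) (fiber n k0)) UNIV
        = infsum (\<lambda>k0. infsum (\<lambda>k. \<Prod>i\<in>{1..n}. epowr (ennreal (norm (psi i (k i)))) pr) (fiber n k0)) UNIV"
      by (simp add: P_def epowr_prod pr)
    also have "\<dots> = (\<Prod>i\<in>{1..n}. S psi i)" unfolding S_def by (rule KL1)
    finally show ?thesis .
  qed
  have Dpow: "epowr (D psi k0) pr = infsum (\<lambda>k. epowr (P psi k) pr) (fiber n k0)" for psi k0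
    unfolding D_def using pr by (rule epowr_inv2)
  show ?thesis
  proof (rule Ynorm_leI)
    assume B: "?B < top"
    show "Y_welldef n (ennreal pr) m"
    proof (rule welldef_I)
      fix psi k0 assume fin: "\<forall>i\<in>{1..n}. FLnorm (ennreal pr) (psi i) < top"
      then have Sfin: "S psi i < top" if "i \<in> {1..n}" for i using that pr' by (auto simp: FLS)
      have "D psi k0 \<le> epowr (\<Prod>i\<in>{1..n}. S psi i) (1 / pr)"
        unfolding D_def KL[symmetric] using pr' by (intro epowr_mono ennterm_le_infsum) auto
      also have "\<dots> < top"
      proof -
        have "(\<Prod>i\<in>{1..n}. S psi i) < top" using Sfin by (rule prod_less_top_ennreal)
        then show ?thesis using pr' by simp
      qed
      finally have Dfin: "D psi k0 < top" .
      have "C k0 < top" using CB[of k0] B by (rule le_less_trans)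
      then have "C k0 * D psi k0 < top" using Dfin by (simp add: ennreal_mult_less_top)
      then show "EE n m psi k0 < top" using EEle[of psi k0] by simp
    qed
  next
    fix psi assume ball: "\<forall>i\<in>{1..n}. FLnorm (ennreal pr) (psi i) \<le> 1"
    then have S1: "S psi i \<le> 1" if "i \<in> {1..n}" for i using that pr' by (auto simp: FLS epowr_le_1_iff)
    have "FLnorm (ennreal pr) (Yop n m psi)
        = epowr (infsum (\<lambda>k0. epowr (ennreal (norm (Yop n m psi k0))) pr) UNIV) (1 / pr)"
      by (simp add: FLnorm_fin pr)
    also have "\<dots> \<le> epowr (infsum (\<lambda>k0. epowr (?B * D psi k0) pr) UNIV) (1 / pr)"
    proof (intro epowr_mono infsum_mono_ennreal pr pr')
      fix k0
      have "ennreal (norm (Yop n m psi k0)) \<le> C k0 * D psi k0" using Y_le_E EEle by (rule order_trans)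
      also have "\<dots> \<le> ?B * D psi k0" using CB by (rule mult_right_mono) simp
      finally show "ennreal (norm (Yop n m psi k0)) \<le> ?B * D psi k0" .
    qed
    also have "\<dots> = epowr (epowr ?B pr * infsum (\<lambda>k0. infsum (\<lambda>k. epowr (P psi k) pr) (fiber n k0)) UNIV) (1 / pr)"
      by (simp add: epowr_mult pr Dpow infsum_cmult_ennreal)
    also have "\<dots> \<le> epowr (epowr ?B pr * 1) (1 / pr)"
      unfolding KL using S1 pr' by (intro epowr_mono mult_left_mono prod_le_1_ennreal) auto
    also have "\<dots> = ?B" using pr by (simp add: epowr_inv)
    finally show "FLnorm (ennreal pr) (Yop n m psi) \<le> ?B" .
  qed
qed

lemma finish2:
  assumes pr: "pr > 0"
    and EEle: "\<And>psi k0. EE n m psi k0 \<le> X k0 * T psi"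
    and T1: "\<And>psi. \<forall>i\<in>{1..n}. FLnorm (ennreal pr) (psi i) \<le> 1 \<Longrightarrow> T psi \<le> 1"
    and Tfin: "\<And>psi. \<forall>i\<in>{1..n}. FLnorm (ennreal pr) (psi i) < top \<Longrightarrow> T psi < top"
  shows "Ynorm n (ennreal pr) m \<le> epowr (infsum (\<lambda>k0. epowr (X k0) pr) UNIV) (1 / pr)"
    (is "_ \<le> ?B")
proof (rule Ynorm_leI)
  have pr': "1 / pr > 0" using pr by simp
  assume B: "?B < top"
  show "Y_welldef n (ennreal pr) m"
  proof (rule welldef_I)
    fix psi k0 assume fin: "\<forall>i\<in>{1..n}. FLnorm (ennreal pr) (psi i) < top"
    have "infsum (\<lambda>k0. epowr (X k0) pr) UNIV < top" using B pr' by simp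
    moreover have "epowr (X k0) pr \<le> infsum (\<lambda>k0. epowr (X k0) pr) UNIV"
      by (rule ennterm_le_infsum) simp
    ultimately have "epowr (X k0) pr < top" by (rule le_less_trans[rotated])
    then have "X k0 < top" using pr by simp
    then have "X k0 * T psi < top" using Tfin[OF fin] by (simp add: ennreal_mult_less_top)
    then show "EE n m psi k0 < top" using EEle[of psi k0] by simp
  qed
next
  have pr': "1 / pr > 0" using pr by simp
  fix psi assume ball: "\<forall>i\<in>{1..n}. FLnorm (ennreal pr) (psi i) \<le> 1"
  have "FLnorm (ennreal pr) (Yop n m psi)
      = epowr (infsum (\<lambda>k0. epowr (ennreal (norm (Yop n m psi k0))) pr) UNIV) (1 / pr)"
    by (simp add: FLnorm_fin pr)
  also have "\<dots> \<le> ?B"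
  proof (intro epowr_mono infsum_mono_ennreal pr pr')
    fix k0
    have "ennreal (norm (Yop n m psi k0)) \<le> X k0 * T psi" using Y_le_E EEle by (rule order_trans)
    also have "\<dots> \<le> X k0 * 1" using T1[OF ball] by (rule mult_left_mono) simp
    finally show "ennreal (norm (Yop n m psi k0)) \<le> X k0" by simp
  qed
  finally show "FLnorm (ennreal pr) (Yop n m psi) \<le> ?B" .
qed

definition SS :: "real \<Rightarrow> (nat \<Rightarrow> int \<Rightarrow> complex) \<Rightarrow> nat \<Rightarrow> ennreal" where
  "SS pr psi j = infsum (\<lambda>k. epowr (ennreal (norm (psi j k))) pr) UNIV"

definition TT :: "nat \<Rightarrow> real \<Rightarrow> (nat \<Rightarrow> int \<Rightarrow> complex) \<Rightarrow> ennreal" where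
  "TT n pr psi = (\<Prod>i\<in>{1..n}. epowr (\<Prod>j\<in>{1..n} - {i}. SS pr psi j) (1 / ((real n - 1) * pr)))"

definition GG :: "nat \<Rightarrow> (nat \<Rightarrow> int \<Rightarrow> complex) \<Rightarrow> nat \<Rightarrow> (nat \<Rightarrow> int) \<Rightarrow> ennreal" where
  "GG n psi i k = (\<Prod>j\<in>{1..n} - {i}. epowr (ennreal (norm (psi j (k j)))) (1 / (real n - 1)))"

lemma FLS: "pr > 0 \<Longrightarrow> FLnorm (ennreal pr) (psi i) = epowr (SS pr psi i) (1 / pr)"
  by (simp add: FLnorm_fin SS_def)

lemma TT_props:
  assumes n: "n \<ge> 2" and pr: "pr > 0"
  shows "\<forall>i\<in>{1..n}. FLnorm (ennreal pr) (psi i) \<le> 1 \<Longrightarrow> TT n pr psi \<le> 1"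
    and "\<forall>i\<in>{1..n}. FLnorm (ennreal pr) (psi i) < top \<Longrightarrow> TT n pr psi < top"
proof -
  have w: "1 / ((real n - 1) * pr) > 0" using n pr by simp
  have pr': "1 / pr > 0" using pr by simp
  show "\<forall>i\<in>{1..n}. FLnorm (ennreal pr) (psi i) \<le> 1 \<Longrightarrow> TT n pr psi \<le> 1"
  proof -
    assume "\<forall>i\<in>{1..n}. FLnorm (ennreal pr) (psi i) \<le> 1"
    then have S1: "SS pr psi j \<le> 1" if "j \<in> {1..n}" for j
      using that pr pr' by (auto simp: FLS epowr_le_1_iff)
    show "TT n pr psi \<le> 1" unfolding TT_def
      using S1 w by (intro prod_le_1_ennreal) (auto simp: epowr_le_1_iff intro!: prod_le_1_ennreal)
  qed
  show "\<forall>i\<in>{1..n}. FLnorm (ennreal pr) (psi i) < top \<Longrightarrow> TT n pr psi < top"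
  proof -
    assume "\<forall>i\<in>{1..n}. FLnorm (ennreal pr) (psi i) < top"
    then have S1: "SS pr psi j < top" if "j \<in> {1..n}" for j
      using that pr pr' by (auto simp: FLS)
    show "TT n pr psi < top" unfolding TT_def
      using S1 w by (intro prod_less_top_ennreal) (auto intro!: prod_less_top_ennreal)
  qed
qed

lemma prod_prod_minus:
  fixes h :: "nat \<Rightarrow> ennreal"
  assumes "finite I"
  shows "(\<Prod>i\<in>I. \<Prod>j\<in>I - {i}. h j) = (\<Prod>j\<in>I. h j ^ (card I - 1))"
proof -
  have "(\<Prod>i\<in>I. \<Prod>j\<in>I - {i}. h j) = (\<Prod>i\<in>I. \<Prod>j\<in>{j\<in>I. i \<noteq> j}. h j)"
    by (intro prod.cong) auto
  also have "\<dots> = (\<Prod>j\<in>I. \<Prod>i\<in>{i\<in>I. i \<noteq> j}. h j)"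
    using assms assms by (rule prod.swap_restrict)
  also have "\<dots> = (\<Prod>j\<in>I. h j ^ (card I - 1))"
  proof (rule prod.cong)
    fix j assume j: "j \<in> I"
    have "{i\<in>I. i \<noteq> j} = I - {j}" by auto
    then show "(\<Prod>i\<in>{i\<in>I. i \<noteq> j}. h j) = h j ^ (card I - 1)"
      using j assms by (simp add: card_Diff_singleton)
  qed simp
  finally show ?thesis .
qed

lemma GG_prod:
  assumes n: "n \<ge> 2"
  shows "(\<Prod>i\<in>{1..n}. GG n psi i k) = (\<Prod>i\<in>{1..n}. ennreal (norm (psi i (k i))))"
proof -
  have c: "card {1..n} - 1 = n - 1" by simp
  have a: "1 / (real n - 1) > 0" using n by simp
  have "(\<Prod>i\<in>{1..n}. GG n psi i k)
      = (\<Prod>j\<in>{1..n}. epowr (ennreal (norm (psi j (k j)))) (1 / (real n - 1)) ^ (n - 1))"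
    unfolding GG_def by (subst prod_prod_minus) (simp_all only: c finite_atLeastAtMost)
  also have "\<dots> = (\<Prod>j\<in>{1..n}. ennreal (norm (psi j (k j))))"
  proof (rule prod.cong)
    fix j
    have "epowr (ennreal (norm (psi j (k j)))) (1 / (real n - 1)) ^ (n - 1)
        = epowr (ennreal (norm (psi j (k j)))) (1 / (real n - 1) * real (n - 1))"
      using n a by (intro epowr_pow) auto
    also have "1 / (real n - 1) * real (n - 1) = 1" using n by (simp add: of_nat_diff)
    finally show "epowr (ennreal (norm (psi j (k j)))) (1 / (real n - 1)) ^ (n - 1) = ennreal (norm (psi j (k j)))"
      by simp
  qed simp
  finally show ?thesis .
qed

lemma GG_sum:
  assumes n: "n \<ge> 2" and pr: "pr > 0" and i: "i \<in> {1..n}"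
  shows "infsum (\<lambda>k. epowr (GG n psi i k) ((real n - 1) * pr)) (fiber n k0) = (\<Prod>j\<in>{1..n} - {i}. SS pr psi j)"
proof -
  have a: "1 / (real n - 1) > 0" and b: "(real n - 1) * pr > 0" using n pr by auto
  have "epowr (GG n psi i k) ((real n - 1) * pr) = (\<Prod>j\<in>{1..n} - {i}. epowr (ennreal (norm (psi j (k j)))) pr)" for k
  proof -
    have "epowr (GG n psi i k) ((real n - 1) * pr)
       = (\<Prod>j\<in>{1..n} - {i}. epowr (epowr (ennreal (norm (psi j (k j)))) (1 / (real n - 1))) ((real n - 1) * pr))"
      unfolding GG_def using b by (rule epowr_prod)
    also have "\<dots> = (\<Prod>j\<in>{1..n} - {i}. epowr (ennreal (norm (psi j (k j)))) pr)"
      using a b n by (intro prod.cong refl) (simp add: epowr_epowr)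
    finally show ?thesis .
  qed
  then have "infsum (\<lambda>k. epowr (GG n psi i k) ((real n - 1) * pr)) (fiber n k0)
      = infsum (\<lambda>k. \<Prod>j\<in>{1..n} - {i}. epowr (ennreal (norm (psi j (k j)))) pr) (fiber n k0)"
    by simp
  also have "\<dots> = (\<Prod>j\<in>{1..n} - {i}. SS pr psi j)"
    unfolding SS_def using i by (rule KL2)
  finally show ?thesis .
qed

lemma prod_0_split: "(\<Prod>i\<in>{0..n::nat}. f i) = f 0 * (\<Prod>i\<in>{1..n}. f i)"
proof -
  have "{0..n} = insert 0 {1..n}" by auto
  then show ?thesis by simp
qed

lemma sum_0_split: "(\<Sum>i\<in>{0..n::nat}. f i) = f 0 + (\<Sum>i\<in>{1..n}. f i)"
proof -
  have "{0..n} = insert 0 {1..n}" by auto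
  then show ?thesis by simp
qed

lemma P_le_TT:
  assumes n: "n \<ge> 2" and pr: "pr > 0" and I: "I = {1..n}"
  shows "(\<Prod>i\<in>I. epowr (infsum (\<lambda>k. epowr (GG n psi i k) ((real n - 1) * pr)) (fiber n k0)) (1 / ((real n - 1) * pr)))
       = TT n pr psi"
  unfolding TT_def I using n pr by (intro prod.cong refl) (simp add: GG_sum)

lemma L_c:
  assumes n: "n \<ge> 2" and pr: "pr = real n / (real n - 1)"
  shows "Ynorm n (ennreal pr) m \<le> epowr (infsum (\<lambda>k0. epowr (SUP k\<in>fiber n k0. ennreal (norm (m k))) pr) UNIV) (1 / pr)"
proof -
  have n1: "real n - 1 > 0" using n by simp
  have prpos: "pr > 0" using pr n1 n by simp
  have npr: "(real n - 1) * pr = real n" using pr n1 by simp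
  show ?thesis
  proof (rule finish2[where T = "TT n pr"])
    show "pr > 0" by (rule prpos)
  next
    fix psi k0
    let ?X = "SUP k\<in>fiber n k0. ennreal (norm (m k))"
    have "EE n m psi k0 \<le> infsum (\<lambda>k. ?X * (\<Prod>i\<in>{1..n}. ennreal (norm (psi i (k i))))) (fiber n k0)"
      unfolding EE_def by (intro infsum_mono_ennreal mult_right_mono SUP_upper) auto
    also have "\<dots> = ?X * infsum (\<lambda>k. \<Prod>i\<in>{1..n}. GG n psi i k) (fiber n k0)"
      unfolding GG_prod[OF n] by (rule infsum_cmult_ennreal)
    also have "infsum (\<lambda>k. \<Prod>i\<in>{1..n}. GG n psi i k) (fiber n k0)
      \<le> (\<Prod>i\<in>{1..n}. epowr (infsum (\<lambda>k. epowr (GG n psi i k) (1 / (1 / ((real n - 1) * pr)))) (fiber n k0))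
            (1 / ((real n - 1) * pr)))"
      using n npr by (intro holder_ennreal) auto
    also have "\<dots> = TT n pr psi"
      using P_le_TT[OF n prpos refl] by simp
    finally show "EE n m psi k0 \<le> ?X * TT n pr psi" by (simp add: mult_left_mono)
  qed (use TT_props[OF n prpos] in auto)
qed

lemma L_c2:
  assumes n: "n \<ge> 2" and prc: "real n / (real n - 1) < pr" and qr: "qr > 0"
    and pq: "1 / qr + (real n / (real n - 1)) / pr = 1"
  shows "Ynorm n (ennreal pr) m \<le> epowr (infsum (\<lambda>k0. epowr
            (epowr (infsum (\<lambda>k. epowr (ennreal (norm (m k))) qr) (fiber n k0)) (1 / qr)) pr) UNIV) (1 / pr)"
proof -
  have n1: "real n - 1 > 0" using n by simp
  have prpos: "pr > 0" using prc n1 n by (smt (verit) divide_pos_pos of_nat_0_le_iff)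
  show ?thesis
  proof (rule finish2[where T = "TT n pr"])
    show "pr > 0" by (rule prpos)
  next
    fix psi k0
    define w where "w i = (if i = 0 then 1 / qr else 1 / ((real n - 1) * pr))" for i :: nat
    define g where "g i = (if i = 0 then (\<lambda>k. ennreal (norm (m k))) else GG n psi i)" for i
    have wpos: "w i > 0" for i using qr n1 prpos by (simp add: w_def)
    have ws: "sum w {0..n} = 1"
    proof -
      have "sum w {0..n} = 1 / qr + (\<Sum>i\<in>{1..n}. 1 / ((real n - 1) * pr))"
        by (simp add: sum_0_split w_def)
      also have "(\<Sum>i\<in>{1..n}. 1 / ((real n - 1) * pr)) = (real n / (real n - 1)) / pr" by simp
      finally show ?thesis using pq by simp
    qed
    have "EE n m psi k0 = infsum (\<lambda>k. \<Prod>i\<in>{0..n}. g i k) (fiber n k0)"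
      unfolding EE_def prod_0_split g_def using GG_prod[OF n] by simp
    also have "\<dots> \<le> (\<Prod>i\<in>{0..n}. epowr (infsum (\<lambda>k. epowr (g i k) (1 / w i)) (fiber n k0)) (w i))"
      using wpos ws by (intro holder_ennreal) auto
    also have "\<dots> = epowr (infsum (\<lambda>k. epowr (ennreal (norm (m k))) qr) (fiber n k0)) (1 / qr)
        * (\<Prod>i\<in>{1..n}. epowr (infsum (\<lambda>k. epowr (GG n psi i k) ((real n - 1) * pr)) (fiber n k0)) (1 / ((real n - 1) * pr)))"
      unfolding prod_0_split by (simp add: g_def w_def)
    also have "\<dots> = epowr (infsum (\<lambda>k. epowr (ennreal (norm (m k))) qr) (fiber n k0)) (1 / qr) * TT n pr psi"
      using P_le_TT[OF n prpos refl] by simp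
    finally show "EE n m psi k0 \<le> epowr (infsum (\<lambda>k. epowr (ennreal (norm (m k))) qr) (fiber n k0)) (1 / qr) * TT n pr psi" .
  qed (use TT_props[OF n prpos] in auto)
qed

lemma ennreal_inverse_cases:
  fixes q :: ennreal
  obtains "q = top" "inverse q = 0" | "q = 0" "inverse q = top" | r where "r > 0" "q = ennreal r" "inverse q = ennreal (1 / r)"
proof (cases q rule: ennreal_cases)
  case (real r)
  then show ?thesis
  proof (cases "r = 0")
    case False
    then show ?thesis using real that(3)[of r] by (simp add: inverse_ennreal inverse_eq_divide)
  qed (use real that in simp)
qed (use that in simp)

theorem lemma7:
  fixes n :: nat and m :: "(nat \<Rightarrow> int) \<Rightarrow> complex" and p q :: ennreal
  assumes "n \<ge> 1" and "1 \<le> p" and "inverse p + inverse q = 1"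
  shows "Ynorm n p m \<le>
           (SUP k0. lpn q (fiber n k0) (\<lambda>k. ennreal (norm (m k))))
       \<and> (n \<ge> 2 \<longrightarrow> ennreal (real n / (real n - 1)) \<le> p \<longrightarrow>
           Ynorm n p m \<le>
             lpn p UNIV (\<lambda>k0. lpn (if p = top then 1 else p / (p - ennreal (real n / (real n - 1))))
                                 (fiber n k0) (\<lambda>k. ennreal (norm (m k)))))"
proof -
  have lpn1: "lpn 1 A f = infsum f A" for A and f :: "'a \<Rightarrow> ennreal"
    using lpn_fin[of 1 A f] by simp
  show ?thesis
  proof (cases "p = top")
    case True
    then have "inverse q = 1" using assms(3) by simp
    then have q1: "q = 1"
      by (cases q rule: ennreal_inverse_cases) (auto simp: ennreal_eq_1)
    show ?thesis using True L_top[of n m] by (simp add: q1 lpn1 lpn_top)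
  next
    case False
    then obtain pr where p: "p = ennreal pr" and pr0: "pr \<ge> 0" by (cases p rule: ennreal_cases) auto
    have pr1: "pr \<ge> 1" using assms(2) p pr0 by (metis ennreal_1 ennreal_le_iff)
    have part1: "Ynorm n p m \<le> (SUP k0. lpn q (fiber n k0) (\<lambda>k. ennreal (norm (m k))))"
    proof (cases "pr = 1")
      case True
      then have "p = 1" using p by simp
      then have "inverse q = 0" using assms(3) by simp
      then have "q = top" by simp
      then show ?thesis using L_one[of n m] \<open>p = 1\<close> by (simp add: lpn_top)
    next
      case False
      then have pr1': "pr > 1" using pr1 by simp
      have ip: "inverse p = ennreal (1 / pr)" using p pr1' by (simp add: inverse_ennreal inverse_eq_divide)
      obtain qr where qr: "qr > 0" "q = ennreal qr" "inverse q = ennreal (1 / qr)"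
      proof (cases q rule: ennreal_inverse_cases)
        case 1
        then have "ennreal (1 / pr) = 1" using assms(3) ip by simp
        then show ?thesis using pr1' by (simp add: ennreal_eq_1)
      next
        case 2
        then show ?thesis using assms(3) by simp
      qed
      have "ennreal (1 / pr + 1 / qr) = 1" using assms(3) ip qr pr1' by (simp add: ennreal_plus[symmetric] del: ennreal_plus)
      then have pq: "1 / pr + 1 / qr = 1" by (simp add: ennreal_eq_1)
      show ?thesis using L_mid[of pr qr n m] pr1' qr pq p by (simp add: lpn_fin)
    qed
    have part2: "Ynorm n p m \<le>
             lpn p UNIV (\<lambda>k0. lpn (if p = top then 1 else p / (p - ennreal (real n / (real n - 1))))
                                 (fiber n k0) (\<lambda>k. ennreal (norm (m k))))"
      if n2: "n \<ge> 2" and pc: "ennreal (real n / (real n - 1)) \<le> p"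
    proof -
      define c where "c = real n / (real n - 1)"
      have n1: "real n - 1 > 0" using n2 by simp
      have c0: "c > 0" using n1 n2 by (simp add: c_def)
      have prc: "c \<le> pr" using pc p pr0 by (simp add: c_def ennreal_le_iff)
      have prpos: "pr > 0" using prc c0 by simp
      show ?thesis
      proof (cases "pr = c")
        case True
        have "p - ennreal c = 0" using True p by simp
        then have "p / (p - ennreal c) = top" using p prpos by (simp add: ennreal_divide_zero)
        then show ?thesis using L_c[OF n2 True[unfolded c_def]] False p prpos True
          by (simp add: lpn_top lpn_fin c_def)
      next
        case False
        then have prc': "c < pr" using prc by simp
        define qr where "qr = pr / (pr - c)"
        have qr0: "qr > 0" using prc' prpos by (simp add: qr_def)
        have "p / (p - ennreal c) = ennreal qr"
          using p prc' c0 prpos by (simp add: ennreal_minus divide_ennreal qr_def)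
        moreover have "1 / qr + c / pr = 1" using prc' prpos by (simp add: qr_def field_simps)
        ultimately show ?thesis
          using L_c2[OF n2 prc'[unfolded c_def] qr0] \<open>p \<noteq> top\<close> p prpos qr0
          by (simp add: lpn_fin c_def)
      qed
    qed
    show ?thesis using part1 part2 by blast
  qed
qed


end
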